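(* Let $\alpha>0$, $\beta>0$, $K\ge1$, $A\ge1$, $\eta>0$, $s\in(0,1)$ and $\delta\in(0,1)$. Let $(\nu_\omega)_{\omega\in\Omega}$ be a $(\delta,\alpha,K)$-Furstenberg tuple such that $\Omega$ satisfies the Frostman condition \[ |\Omega\cap B_r|\le A\,r^\beta|\Omega|\quad\text{for every ball }B_r\subset\mathbb{R}^2\text{ of radius } r\in[\delta,1]. \] Write $E_\omega=\operatorname{supp}(\nu_\omega)$, $E=\bigcup_{\omega\in\Omega}E_\omega$, and assume $\mathcal{N}_{\delta^s}(E)\le(\delta^s)^{-\alpha-\beta/2-\eta}$. Let $\Lambda$ be a maximal $\delta^s$-separated subset of $\Omega$ and for $\lambda\in\Lambda$ put $\Omega_\lambda=\Omega\cap B^2(\lambda,\delta^s)$. Then there is a set $\Lambda'\subset\Lambda$ such that \[ |\Lambda'|\ \ge\ c\,(\delta^s)^{-\beta} \qquad\text{and}\qquad |\Omega_\lambda|\ \ge\ c\,(\delta^s)^{\beta+2\eta}|\Omega|\ \text{ for all }\lambda\in\Lambda', \] where $c>0$ depends only on $K,\alpha,\beta$ and $A$.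
   Context: $B^d(x,r)$ denotes the open ball of centre $x$ and radius $r$ in $\mathbb{R}^d$, $B^d=B^d(0,1)$, and $B_r$ an arbitrary ball of radius $r$. A probability measure $\mu$ on $B^1=(-1,1)$ is a $(\delta,\alpha,K)$-measure if $\mu(B_r)\le Kr^\alpha$ for every ball $B_r$ of radius $r\in[\delta,1]$. For $\omega=(a,b)\in\mathbb{R}^2$, $L_\omega(t)=at+b$, and $L_\omega$ also denotes the line $\{(t,y):y=at+b\}$. A family $(\nu_\omega)_{\omega\in\Omega}$ is a $(\delta,\alpha,K)$-Furstenberg tuple if $\Omega\subset B^2$ is a $\delta$-separated set and, for each $\omega\in\Omega$, there is a $(\delta,\alpha,K)$-measure $\nu'_\omega$ with $\nu_\omega$ equal to the push-forward of $\nu'_\omega$ under the map $x\mapsto(x,L_\omega(x))$. $\mathcal{N}_r(A)$ denotes the smallest number of balls of radius $r$ needed to cover $A$; $|\cdot|$ denotes cardinality. *)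

theory Defs
  imports "HOL-Probability.Probability"
begin

definition line_map :: "real \<times> real \<Rightarrow> real \<Rightarrow> real" where
  "line_map \<omega> t = fst \<omega> * t + snd \<omega>"

definition separated :: "real \<Rightarrow> ('a::metric_space) set \<Rightarrow> bool" where
  "separated d S \<longleftrightarrow> (\<forall>x\<in>S. \<forall>y\<in>S. x \<noteq> y \<longrightarrow> d \<le> dist x y)"

definition maximal_separated_subset :: "real \<Rightarrow> ('a::metric_space) set \<Rightarrow> 'a set \<Rightarrow> bool" where
  "maximal_separated_subset d L S \<longleftrightarrow>
     L \<subseteq> S \<and> separated d L \<and> (\<forall>L'. L \<subseteq> L' \<and> L' \<subseteq> S \<and> separated d L' \<longrightarrow> L' = L)"

text \<open>(delta,alpha,K)-measure: a probability measure on (-1,1) (Borel measure on the real line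
  giving full mass to (-1,1)) with the non-concentration bound for radii in [delta,1].\<close>
definition dak_measure :: "real \<Rightarrow> real \<Rightarrow> real \<Rightarrow> real measure \<Rightarrow> bool" where
  "dak_measure \<delta> \<alpha> K \<mu> \<longleftrightarrow>
     prob_space \<mu> \<and> sets \<mu> = sets borel \<and> measure \<mu> {-1<..<1} = 1 \<and>
     (\<forall>x r. \<delta> \<le> r \<and> r \<le> 1 \<longrightarrow> measure \<mu> (ball x r) \<le> K * r powr \<alpha>)"

definition furstenberg_tuple ::
  "real \<Rightarrow> real \<Rightarrow> real \<Rightarrow> (real \<times> real) set \<Rightarrow> (real \<times> real \<Rightarrow> (real \<times> real) measure) \<Rightarrow> bool" where
  "furstenberg_tuple \<delta> \<alpha> K \<Omega> \<nu> \<longleftrightarrow>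
     \<Omega> \<subseteq> ball 0 1 \<and> separated \<delta> \<Omega> \<and>
     (\<forall>\<omega>\<in>\<Omega>. \<exists>\<nu>'. dak_measure \<delta> \<alpha> K \<nu>' \<and>
                 \<nu> \<omega> = distr \<nu>' borel (\<lambda>x. (x, line_map \<omega> x)))"

definition support :: "('a::metric_space) measure \<Rightarrow> 'a set" where
  "support M = {x. \<forall>e>0. 0 < emeasure M (ball x e)}"

definition covering_number :: "real \<Rightarrow> ('a::metric_space) set \<Rightarrow> nat" where
  "covering_number r A = Inf {card C | C. finite C \<and> A \<subseteq> (\<Union>c\<in>C. ball c r)}"

end

theory Submission
  imports Defs
begin

lemma support_null:
  fixes M :: "('a::{metric_space, second_countable_topology}) measure"
  assumes "sets M = sets borel"
  shows "- support M \<in> null_sets M"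
proof -
  define F where "F = {ball x e | x e. e > 0 \<and> emeasure M (ball x e) = 0}"
  have op: "\<And>S. S \<in> F \<Longrightarrow> open S" unfolding F_def by auto
  obtain F' where F': "F' \<subseteq> F" "countable F'" "\<Union>F' = \<Union>F" using Lindelof[OF op] by blast
  have eq: "\<Union>F = - support M"
  proof
    show "\<Union>F \<subseteq> - support M"
    proof
      fix y assume "y \<in> \<Union>F"
      then obtain x e where xe: "e > 0" "emeasure M (ball x e) = 0" "y \<in> ball x e" unfolding F_def by auto
      have "ball y (e - dist x y) \<subseteq> ball x e" proof (rule subsetI)
        fix z assume "z \<in> ball y (e - dist x y)"
        then have "dist y z < e - dist x y" by simp
        moreover have "dist x z \<le> dist x y + dist y z" by (rule dist_triangle)
        ultimately have "dist x z < e" by linarith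
        then show "z \<in> ball x e" by (simp only: mem_ball)
      qed
      then have "emeasure M (ball y (e - dist x y)) \<le> emeasure M (ball x e)"
        by (intro emeasure_mono) (auto simp: assms)
      then have "emeasure M (ball y (e - dist x y)) = 0" using xe by simp
      moreover have "e - dist x y > 0" using xe by (simp add: dist_commute)
      ultimately have "\<exists>e'>0. \<not> 0 < emeasure M (ball y e')" by (intro exI[of _ "e - dist x y"]) simp
      then show "y \<in> - support M" unfolding support_def by simp
    qed
    show "- support M \<subseteq> \<Union>F"
    proof
      fix y assume "y \<in> - support M"
      then obtain e where "e > 0" "\<not> 0 < emeasure M (ball y e)" unfolding support_def by auto
      then show "y \<in> \<Union>F" unfolding F_def by (auto intro!: exI[of _ "ball y e"])
    qed
  qed
  have "(\<Union>X\<in>F'. X) \<in> null_sets M"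
  proof (rule null_sets_UN'[OF F'(2)])
    fix X assume "X \<in> F'"
    then have "X \<in> F" using F' by auto
    then obtain x e where X: "X = ball x e" "emeasure M (ball x e) = 0" unfolding F_def by blast
    have "X \<in> sets M" unfolding X(1) assms by simp
    then show "X \<in> null_sets M" using X by (simp add: null_sets_def)
  qed
  then show ?thesis using F' eq by simp
qed

lemma dist_prod_le: "dist (p::real\<times>real) q \<le> \<bar>fst p - fst q\<bar> + \<bar>snd p - snd q\<bar>"
proof -
  have "dist p q = sqrt ((dist (fst p) (fst q))\<^sup>2 + (dist (snd p) (snd q))\<^sup>2)"
    by (metis dist_Pair_Pair prod.collapse)
  also have "\<dots> \<le> \<bar>dist (fst p) (fst q)\<bar> + \<bar>dist (snd p) (snd q)\<bar>" by (rule sqrt_sum_squares_le_sum_abs)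
  finally show ?thesis by (simp add: dist_real_def)
qed

lemma floor_eq_close: "\<lfloor>a::real\<rfloor> = \<lfloor>b\<rfloor> \<Longrightarrow> \<bar>a - b\<bar> < 1"
  by (smt (verit, best) floor_eq_iff)

lemma half_lemma: "\<rho> > 0 \<Longrightarrow> \<bar>2*x/\<rho>\<bar> < 1 \<Longrightarrow> \<bar>x::real\<bar> < \<rho>/2"
  by (simp add: abs_mult abs_divide field_simps)

lemma packing:
  fixes S :: "(real \<times> real) set" and q :: "real \<times> real"
  assumes rho: "\<rho> > 0" and sep: "separated \<rho> S"
    and box: "\<And>p. p \<in> S \<Longrightarrow> \<bar>fst p - fst q\<bar> \<le> R \<and> \<bar>snd p - snd q\<bar> \<le> R"
  shows "finite S \<and> real (card S) \<le> (2 * of_int \<lceil>2*R/\<rho>\<rceil> + 1)^2"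
proof -
  define m where "m = \<lceil>2*R/\<rho>\<rceil>"
  define f where "f p = (\<lfloor>2*(fst p - fst q)/\<rho>\<rfloor>, \<lfloor>2*(snd p - snd q)/\<rho>\<rfloor>)" for p
  have fl: "-m \<le> \<lfloor>t\<rfloor> \<and> \<lfloor>t\<rfloor> \<le> m" if "\<bar>t\<bar> \<le> 2*R/\<rho>" for t
  proof -
    have "t \<le> of_int m" using that unfolding m_def by (smt (verit) le_of_int_ceiling)
    moreover have "- t \<le> of_int m" using that unfolding m_def by (smt (verit) le_of_int_ceiling)
    ultimately show ?thesis by (smt (verit, ccfv_threshold) floor_le_iff le_floor_iff of_int_minus)
  qed
  have sc: "\<bar>2*(x::real)/\<rho>\<bar> \<le> 2*R/\<rho>" if "\<bar>x\<bar> \<le> R" for x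
    using that rho by (simp add: abs_mult abs_divide divide_right_mono)
  have img: "f ` S \<subseteq> {-m..m} \<times> {-m..m}"
  proof
    fix z assume "z \<in> f ` S"
    then obtain p where p: "p \<in> S" "z = f p" by blast
    have a: "- m \<le> \<lfloor>2*(fst p - fst q)/\<rho>\<rfloor> \<and> \<lfloor>2*(fst p - fst q)/\<rho>\<rfloor> \<le> m"
      using fl[OF sc] box[OF p(1)] by blast
    have b: "- m \<le> \<lfloor>2*(snd p - snd q)/\<rho>\<rfloor> \<and> \<lfloor>2*(snd p - snd q)/\<rho>\<rfloor> \<le> m"
      using fl[OF sc] box[OF p(1)] by blast
    show "z \<in> {-m..m} \<times> {-m..m}"
      unfolding p(2) f_def mem_Times_iff atLeastAtMost_iff fst_conv snd_conv using a b by blast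
  qed
  have inj: "inj_on f S"
  proof (rule inj_onI)
    fix p p' assume pp: "p \<in> S" "p' \<in> S" "f p = f p'"
    then have e1: "\<bar>2*(fst p - fst q)/\<rho> - 2*(fst p' - fst q)/\<rho>\<bar> < 1"
      and e2: "\<bar>2*(snd p - snd q)/\<rho> - 2*(snd p' - snd q)/\<rho>\<bar> < 1"
      unfolding f_def by (auto intro!: floor_eq_close)
    have "2*(fst p - fst q)/\<rho> - 2*(fst p' - fst q)/\<rho> = 2*(fst p - fst p')/\<rho>" using rho by (simp add: field_simps)
    with e1 have "\<bar>fst p - fst p'\<bar> < \<rho>/2" using rho half_lemma by metis
    moreover have "2*(snd p - snd q)/\<rho> - 2*(snd p' - snd q)/\<rho> = 2*(snd p - snd p')/\<rho>" using rho by (simp add: field_simps)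
    with e2 have "\<bar>snd p - snd p'\<bar> < \<rho>/2" using rho half_lemma by metis
    ultimately have "dist p p' < \<rho>" using dist_prod_le[of p p'] by linarith
    then show "p = p'" using sep pp unfolding separated_def by force
  qed
  have fin: "finite S" using finite_imageD[OF finite_subset[OF img] inj] by simp
  show ?thesis
  proof (cases "S = {}")
    case True then show ?thesis by simp
  next
    case False
    then obtain p where "p \<in> S" by blast
    then have "R \<ge> 0" using box[of p] by linarith
    then have "2*R/\<rho> \<ge> 0" using rho by simp
    then have m0: "m \<ge> 0" unfolding m_def by linarith
    have "card S = card (f ` S)" using card_image[OF inj] by simp
    also have "\<dots> \<le> card ({-m..m} \<times> {-m..m})" by (rule card_mono[OF _ img]) simp
    finally have "real (card S) \<le> real (card ({-m..m} \<times> {-m..m}))" by (simp only: of_nat_le_iff)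
    also have "card ({-m..m} \<times> {-m..m}) = nat (2*m+1) * nat (2*m+1)" by (simp add: card_cartesian_product)
    finally show ?thesis using fin m0 unfolding m_def by (simp add: power2_eq_square)
  qed
qed

lemma line_pairs:
  fixes M :: "real measure" and cs :: "(real\<times>real) list" and a b :: real
  assumes dak: "dak_measure \<delta> \<alpha> K M"
    and rho: "0 < \<rho>" "\<delta> \<le> \<rho>" "2*\<rho> \<le> c0" "c0 \<le> 1" and c0K: "K * c0 powr \<alpha> \<le> 1/2"
    and cov: "measure M ({-1<..<1} \<inter> (\<lambda>x. (x, a*x+b)) -` (\<Union>k<length cs. ball (cs!k) \<rho>)) = 1"
  shows "1/2 \<le> real (card {(i,j). i < length cs \<and> j < length cs \<and> c0/2 \<le> \<bar>fst (cs!i) - fst (cs!j)\<bar> \<and>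
            (\<exists>x\<in>{-1<..<1}. dist (x, a*x+b) (cs!i) < \<rho>) \<and> (\<exists>x\<in>{-1<..<1}. dist (x, a*x+b) (cs!j) < \<rho>)}) * (K * \<rho> powr \<alpha>)^2"
proof -
  interpret prob_space M using dak unfolding dak_measure_def by simp
  have sM: "sets M = sets borel" using dak unfolding dak_measure_def by simp
  have fr: "\<And>x r. \<delta> \<le> r \<Longrightarrow> r \<le> 1 \<Longrightarrow> measure M (ball x r) \<le> K * r powr \<alpha>"
    using dak unfolding dak_measure_def by simp
  define N where "N = length cs"
  define u where "u k = fst (cs!k)" for k
  define Q where "Q k = (\<exists>x\<in>{-1<..<1}. dist (x, a*x+b) (cs!k) < \<rho>)" for k
  define far where "far i j = (c0/2 \<le> \<bar>u i - u j\<bar>)" for i j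
  define P where "P = {(i,j). i < N \<and> j < N \<and> far i j \<and> Q i \<and> Q j}"
  define C where "C = (K * \<rho> powr \<alpha>)^2"
  define g where "g x = (x, a*x+b)" for x :: real
  define G where "G k = g -` ball (cs!k) \<rho>" for k
  define T where "T k = ({-1<..<1} \<inter> G k) - (\<Union>m<k. G m)" for k
  have openG: "open (G k)" for k unfolding G_def g_def
    by (rule continuous_open_vimage[OF open_ball]) (intro continuous_intros)
  have Gs: "G k \<in> sets M" for k using openG[of k] sM by simp
  have Is: "{-1<..<1::real} \<in> sets M" using sM by simp
  have Ts: "T k \<in> sets M" for k unfolding T_def using Gs Is by (intro sets.Diff sets.Int sets.finite_UN) auto
  have TG: "T k \<subseteq> G k" for k unfolding T_def by auto
  have TnG: "m < k \<Longrightarrow> T k \<inter> G m = {}" for m k unfolding T_def by auto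
  have disj: "disjoint_family_on T A" for A
    unfolding disjoint_family_on_def
  proof (intro ballI impI)
    fix m n :: nat assume "m \<noteq> n"
    then show "T m \<inter> T n = {}"
    proof (cases "m < n")
      case True then show ?thesis using TnG[of m n] TG[of m] by blast
    next
      case False then have "n < m" using \<open>m \<noteq> n\<close> by simp
      then show ?thesis using TnG[of n m] TG[of n] by blast
    qed
  qed
  have UT: "(\<Union>k<N. T k) = {-1<..<1} \<inter> g -` (\<Union>k<N. ball (cs!k) \<rho>)"
  proof
    show "(\<Union>k<N. T k) \<subseteq> {-1<..<1} \<inter> g -` (\<Union>k<N. ball (cs!k) \<rho>)"
      unfolding T_def G_def by auto
    show "{-1<..<1} \<inter> g -` (\<Union>k<N. ball (cs!k) \<rho>) \<subseteq> (\<Union>k<N. T k)"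
    proof
      fix x assume x: "x \<in> {-1<..<1} \<inter> g -` (\<Union>k<N. ball (cs!k) \<rho>)"
      then obtain k where k: "k < N" "x \<in> G k" unfolding G_def by auto
      define k0 where "k0 = (LEAST k. x \<in> G k)"
      have "x \<in> G k0" unfolding k0_def by (rule LeastI[of _ k]) (rule k(2))
      moreover have "k0 \<le> k" unfolding k0_def by (rule Least_le) (rule k(2))
      moreover have "\<And>m. m < k0 \<Longrightarrow> x \<notin> G m" unfolding k0_def by (rule not_less_Least)
      ultimately have "x \<in> T k0" "k0 < N" using x k unfolding T_def by auto
      then show "x \<in> (\<Union>k<N. T k)" by auto
    qed
  qed
  define w where "w k = measure M (T k)" for k
  have sum1: "(\<Sum>k<N. w k) = 1"
  proof -
    have "measure M (\<Union>k<N. T k) = (\<Sum>k<N. w k)" unfolding w_def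
      by (rule finite_measure_finite_Union) (use Ts disj in auto)
    moreover have "measure M (\<Union>k<N. T k) = 1" unfolding UT using cov unfolding g_def N_def by simp
    ultimately show ?thesis by simp
  qed
  have Tball: "T k \<subseteq> ball (u k) \<rho>" for k
  proof
    fix x assume "x \<in> T k"
    then have "g x \<in> ball (cs!k) \<rho>" using TG[of k] unfolding G_def by blast
    then have "dist (g x) (cs!k) < \<rho>" by (simp add: dist_commute)
    moreover have "dist (fst (g x)) (fst (cs!k)) \<le> dist (g x) (cs!k)" by (rule dist_fst_le)
    ultimately show "x \<in> ball (u k) \<rho>" unfolding u_def g_def by (simp add: dist_commute)
  qed
  have w0: "0 \<le> w k" for k by (simp add: w_def)
  have wle: "w k \<le> K * \<rho> powr \<alpha>" for k
  proof -
    have "w k \<le> measure M (ball (u k) \<rho>)" unfolding w_def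
      by (rule finite_measure_mono[OF Tball]) (simp add: sM)
    also have "\<dots> \<le> K * \<rho> powr \<alpha>" using fr rho by simp
    finally show ?thesis .
  qed
  have wQ: "w k = 0" if "\<not> Q k" for k
  proof -
    have "T k = {}" using that TG unfolding Q_def G_def g_def T_def by (auto simp: dist_commute)
    then show ?thesis by (simp add: w_def)
  qed
  have near: "(\<Sum>j<N. if far i j then 0 else w j) \<le> 1/2" for i
  proof -
    define J where "J = {j. j < N \<and> \<not> far i j}"
    have "(\<Sum>j<N. if far i j then 0 else w j) = (\<Sum>j\<in>J. w j)"
      unfolding J_def by (rule sum.mono_neutral_cong_right) auto
    also have "\<dots> = measure M (\<Union>j\<in>J. T j)" unfolding w_def
      by (rule finite_measure_finite_Union[symmetric]) (use Ts disj in \<open>auto simp: J_def\<close>)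
    also have "\<dots> \<le> measure M (ball (u i) c0)"
    proof (rule finite_measure_mono)
      show "(\<Union>j\<in>J. T j) \<subseteq> ball (u i) c0"
      proof
        fix x assume "x \<in> (\<Union>j\<in>J. T j)"
        then obtain j where j: "j \<in> J" "x \<in> T j" by auto
        then have "x \<in> ball (u j) \<rho>" using Tball[of j] by blast
        then have "dist (u j) x < \<rho>" by simp
        moreover have "\<bar>u i - u j\<bar> < c0/2" using j(1) unfolding J_def far_def by auto
        ultimately have "dist (u i) x < c0" using rho unfolding dist_real_def by linarith
        then show "x \<in> ball (u i) c0" by simp
      qed
    qed (simp add: sM)
    also have "\<dots> \<le> K * c0 powr \<alpha>" using fr rho by simp
    finally show ?thesis using c0K by simp
  qed
  have split: "w i * w j = (if far i j then w i * w j else 0) + w i * (if far i j then 0 else w j)" for i j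
    by simp
  have "1 = (\<Sum>i<N. w i) * (\<Sum>j<N. w j)" using sum1 by simp
  also have "\<dots> = (\<Sum>i<N. \<Sum>j<N. w i * w j)" by (rule sum_product)
  also have "\<dots> = (\<Sum>i<N. \<Sum>j<N. if far i j then w i * w j else 0) + (\<Sum>i<N. w i * (\<Sum>j<N. if far i j then 0 else w j))"
    by (subst split) (simp add: sum.distrib sum_distrib_left)
  also have "(\<Sum>i<N. w i * (\<Sum>j<N. if far i j then 0 else w j)) \<le> (\<Sum>i<N. w i * (1/2))"
    by (rule sum_mono) (rule mult_left_mono[OF near w0])
  also have "(\<Sum>i<N. w i * (1/2)) = 1/2"
  proof -
    have "(\<Sum>i<N. w i * (1/2)) = (\<Sum>i<N. w i) * (1/2)" by (rule sum_distrib_right[symmetric])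
    then show ?thesis using sum1 by simp
  qed
  also have "(\<Sum>i<N. \<Sum>j<N. if far i j then w i * w j else 0) \<le> (\<Sum>i<N. \<Sum>j<N. if (i,j) \<in> P then C else 0)"
  proof (intro sum_mono)
    fix i j assume ij: "i \<in> {..<N}" "j \<in> {..<N}"
    show "(if far i j then w i * w j else 0) \<le> (if (i,j) \<in> P then C else 0)"
    proof (cases "far i j \<and> Q i \<and> Q j")
      case True
      then have "(i,j) \<in> P" using ij unfolding P_def by auto
      moreover have "w i * w j \<le> (K * \<rho> powr \<alpha>) * (K * \<rho> powr \<alpha>)"
        by (rule mult_mono[OF wle wle]) (use w0 wle in \<open>auto intro: order_trans\<close>)
      ultimately show ?thesis using True unfolding C_def by (simp add: power2_eq_square)
    next
      case False
      then have "(if far i j then w i * w j else 0) = 0" using wQ by auto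
      moreover have "0 \<le> (if (i,j) \<in> P then C else 0)" unfolding C_def by simp
      ultimately show ?thesis by simp
    qed
  qed
  also have "(\<Sum>i<N. \<Sum>j<N. if (i,j) \<in> P then C else 0) = (\<Sum>p\<in>{..<N}\<times>{..<N}. if p \<in> P then C else 0)"
    by (subst sum.cartesian_product) (simp add: case_prod_beta)
  also have "\<dots> = (\<Sum>p\<in>({..<N}\<times>{..<N}) \<inter> P. C)" by (rule sum.inter_restrict[symmetric]) simp
  also have "({..<N}\<times>{..<N}) \<inter> P = P" unfolding P_def by auto
  finally have "1 \<le> real (card P) * C + 1/2" by simp
  moreover have "P = {(i,j). i < length cs \<and> j < length cs \<and> c0/2 \<le> \<bar>fst (cs!i) - fst (cs!j)\<bar> \<and>
            (\<exists>x\<in>{-1<..<1}. dist (x, a*x+b) (cs!i) < \<rho>) \<and> (\<exists>x\<in>{-1<..<1}. dist (x, a*x+b) (cs!j) < \<rho>)}"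
    unfolding P_def N_def far_def Q_def u_def by simp
  ultimately show ?thesis unfolding C_def by simp
qed

lemma line_cover:
  fixes M :: "real measure" and a b :: real
  assumes dak: "dak_measure \<delta> \<alpha> K M" and sub: "support (distr M borel (\<lambda>x. (x, a*x+b))) \<subseteq> U"
    and U: "open U"
  shows "measure M ({-1<..<1} \<inter> (\<lambda>x. (x, a*x+b)) -` U) = 1"
proof -
  interpret prob_space M using dak unfolding dak_measure_def by simp
  have sM: "sets M = sets borel" using dak unfolding dak_measure_def by simp
  have spM: "space M = UNIV" using sets_eq_imp_space_eq[OF sM] by simp
  have I1: "measure M {-1<..<1} = 1" using dak unfolding dak_measure_def by simp
  define g where "g x = (x, a*x+b)" for x :: real
  have gb: "g \<in> measurable borel borel" unfolding g_def
    by (intro borel_measurable_continuous_onI continuous_intros)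
  have gm: "g \<in> measurable M borel" by (subst measurable_cong_sets[OF sM refl]) (rule gb)
  define S where "S = support (distr M borel g)"
  have null: "- S \<in> null_sets (distr M borel g)" unfolding S_def by (rule support_null) simp
  then have nS: "- S \<in> sets borel" and e0: "emeasure (distr M borel g) (- S) = 0"
    by (auto simp: null_sets_def)
  define V where "V = g -` (- S)"
  have "emeasure M V = 0" using e0 emeasure_distr[OF gm nS] unfolding V_def spM by simp
  then have V0: "measure M V = 0" by (simp add: measure_def)
  have Vs: "V \<in> sets M" using measurable_sets[OF gm nS] unfolding V_def spM by simp
  define W where "W = {-1<..<1} \<inter> g -` U"
  have Ws: "W \<in> sets M" unfolding W_def using measurable_sets[OF gm, of U] U spM sM by auto
  have subS: "S \<subseteq> U" using sub unfolding S_def g_def .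
  have "{-1<..<1} \<subseteq> W \<union> V"
  proof
    fix x assume x: "x \<in> {-1<..<1::real}"
    show "x \<in> W \<union> V"
    proof (cases "g x \<in> S")
      case True then have "g x \<in> U" using subS by blast
      then show ?thesis using x unfolding W_def by simp
    next
      case False then show ?thesis unfolding V_def by simp
    qed
  qed
  then have "measure M {-1<..<1} \<le> measure M (W \<union> V)"
    by (intro finite_measure_mono) (use Ws Vs in auto)
  also have "\<dots> \<le> measure M W + measure M V"
    by (intro measure_subadditive Ws Vs) (auto simp: emeasure_eq_measure)
  finally have "1 \<le> measure M W" using I1 V0 by simp
  moreover have "measure M W \<le> 1" by (rule prob_le_1)
  ultimately show ?thesis unfolding W_def g_def by simp
qed

lemma support_bounded:
  fixes M :: "real measure" and a b :: real
  assumes dak: "dak_measure \<delta> \<alpha> K M" and ab: "\<bar>a\<bar> < 1" "\<bar>b\<bar> < 1"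
  shows "support (distr M borel (\<lambda>x. (x, a*x+b))) \<subseteq> cball 0 4"
proof
  interpret prob_space M using dak unfolding dak_measure_def by simp
  have sM: "sets M = sets borel" using dak unfolding dak_measure_def by simp
  have spM: "space M = UNIV" using sets_eq_imp_space_eq[OF sM] by simp
  have I1: "measure M {-1<..<1} = 1" using dak unfolding dak_measure_def by simp
  define g where "g x = (x, a*x+b)" for x :: real
  have gb: "g \<in> measurable borel borel" unfolding g_def
    by (intro borel_measurable_continuous_onI continuous_intros)
  have gm: "g \<in> measurable M borel" by (subst measurable_cong_sets[OF sM refl]) (rule gb)
  fix z assume zs: "z \<in> support (distr M borel (\<lambda>x. (x, a*x+b)))"
  show "z \<in> cball 0 4"
  proof (rule ccontr)
    assume "z \<notin> cball 0 4"
    then have nz: "norm z > 4" by (metis mem_cball dist_0_norm not_le)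
    have sub: "g -` ball z 1 \<subseteq> UNIV - {-1<..<1}"
    proof
      fix x assume x: "x \<in> g -` ball z 1"
      show "x \<in> UNIV - {-1<..<1}"
      proof (rule ccontr)
        assume "x \<notin> UNIV - {-1<..<1}"
        then have x1: "\<bar>x\<bar> < 1" by auto
        have "\<bar>a*x\<bar> \<le> 1" using x1 ab by (simp add: abs_mult mult_le_one)
        then have "\<bar>a*x+b\<bar> < 2" using ab by linarith
        moreover have "dist (g x) 0 \<le> \<bar>fst (g x) - fst (0::real\<times>real)\<bar> + \<bar>snd (g x) - snd (0::real\<times>real)\<bar>"
          by (rule dist_prod_le)
        ultimately have "norm (g x) < 3" using x1 unfolding g_def by (simp add: dist_norm)
        moreover have "dist z (g x) < 1" using x by simp
        moreover have "norm z \<le> norm (g x) + dist z (g x)" by (metis dist_norm norm_triangle_sub add.commute)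
        ultimately show False using nz by linarith
      qed
    qed
    have "emeasure (distr M borel g) (ball z 1) = emeasure M (g -` ball z 1)"
      using emeasure_distr[OF gm, of "ball z 1"] spM by simp
    also have "\<dots> \<le> emeasure M (UNIV - {-1<..<1})"
      by (rule emeasure_mono[OF sub]) (simp add: sM)
    also have "\<dots> = 0"
    proof -
      have "prob (space M - {-1<..<1}) = 1 - prob {-1<..<1}" by (rule prob_compl) (simp add: sM)
      then show ?thesis using I1 spM by (simp add: emeasure_eq_measure)
    qed
    finally have "emeasure (distr M borel g) (ball z 1) = 0" by simp
    moreover have "0 < emeasure (distr M borel g) (ball z 1)"
      using zs unfolding support_def g_def mem_Collect_eq by (metis zero_less_one)
    ultimately show False by simp
  qed
qed

lemma line_pt:
  fixes l p :: "real \<times> real"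
  assumes l: "l \<in> ball 0 1" and x: "x \<in> {-1<..<1}" "dist (x, line_map l x) p < \<rho>"
  shows "\<bar>fst l * fst p + snd l - snd p\<bar> < 2*\<rho> \<and> \<bar>fst p\<bar> < 1 + \<rho>"
proof -
  have "\<bar>fst l\<bar> \<le> norm l" by (metis fst_conv norm_fst_le prod.collapse real_norm_def)
  then have a1: "\<bar>fst l\<bar> < 1" using l by (simp add: dist_norm)
  have d1: "\<bar>x - fst p\<bar> < \<rho>" using dist_fst_le[of "(x, line_map l x)" p] x(2) by (simp add: dist_real_def)
  have d2: "\<bar>fst l * x + snd l - snd p\<bar> < \<rho>" using dist_snd_le[of "(x, line_map l x)" p] x(2)
    by (simp add: dist_real_def line_map_def)
  have "\<bar>fst l * (fst p - x)\<bar> \<le> \<bar>fst p - x\<bar>" using a1 by (simp add: abs_mult mult_left_le_one_le)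
  moreover have "fst l * fst p + snd l - snd p = (fst l * x + snd l - snd p) + fst l * (fst p - x)"
    by (simp add: algebra_simps)
  ultimately have "\<bar>fst l * fst p + snd l - snd p\<bar> < 2*\<rho>" using d1 d2
    abs_triangle_ineq[of "fst l * x + snd l - snd p" "fst l * (fst p - x)"] by (simp add: abs_minus_commute)
  moreover have "\<bar>fst p\<bar> < 1 + \<rho>" using d1 x(1) by auto
  ultimately show ?thesis by simp
qed

lemma pair_count:
  fixes \<Lambda> :: "(real \<times> real) set" and p q :: "real \<times> real"
  assumes L: "\<Lambda> \<subseteq> ball 0 1" and sep: "separated \<rho> \<Lambda>" and rho: "0 < \<rho>" "\<rho> \<le> 1"
    and c0: "0 < c0" "c0 \<le> 1" and far: "c0/2 \<le> \<bar>fst p - fst q\<bar>"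
  shows "real (card {l\<in>\<Lambda>. (\<exists>x\<in>{-1<..<1}. dist (x, line_map l x) p < \<rho>) \<and>
                              (\<exists>x\<in>{-1<..<1}. dist (x, line_map l x) q < \<rho>)}) \<le> (2 * of_int \<lceil>72/c0\<rceil> + 1)^2"
proof -
  define S where "S = {l\<in>\<Lambda>. (\<exists>x\<in>{-1<..<1}. dist (x, line_map l x) p < \<rho>) \<and>
                              (\<exists>x\<in>{-1<..<1}. dist (x, line_map l x) q < \<rho>)}"
  have key: "\<bar>fst l * fst p + snd l - snd p\<bar> < 2*\<rho> \<and> \<bar>fst l * fst q + snd l - snd q\<bar> < 2*\<rho> \<and> \<bar>fst p\<bar> < 2"
    if lS: "l \<in> S" for l
  proof -
    have lL: "l \<in> ball 0 1" using lS L unfolding S_def by auto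
    obtain x1 where x1: "x1 \<in> {-1<..<1}" "dist (x1, line_map l x1) p < \<rho>" using lS unfolding S_def by auto
    obtain x2 where x2: "x2 \<in> {-1<..<1}" "dist (x2, line_map l x2) q < \<rho>" using lS unfolding S_def by auto
    show ?thesis using line_pt[OF lL x1] line_pt[OF lL x2] rho by linarith
  qed
  show ?thesis
  proof (cases "S = {}")
    case True
    then show ?thesis unfolding S_def[symmetric] by simp
  next
    case False
    then obtain l0 where l0: "l0 \<in> S" by blast
    have box: "\<bar>fst l - fst l0\<bar> \<le> 36*\<rho>/c0 \<and> \<bar>snd l - snd l0\<bar> \<le> 36*\<rho>/c0" if l: "l \<in> S" for l
    proof -
      define da where "da = fst l - fst l0"
      define db where "db = snd l - snd l0"
      have eq1: "da * fst p + db = (fst l * fst p + snd l - snd p) - (fst l0 * fst p + snd l0 - snd p)"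
        unfolding da_def db_def by (simp add: algebra_simps)
      have e1: "\<bar>da * fst p + db\<bar> < 4*\<rho>" using key[OF l] key[OF l0]
        abs_triangle_ineq4[of "fst l * fst p + snd l - snd p" "fst l0 * fst p + snd l0 - snd p"] unfolding eq1 by linarith
      have eq2: "da * fst q + db = (fst l * fst q + snd l - snd q) - (fst l0 * fst q + snd l0 - snd q)"
        unfolding da_def db_def by (simp add: algebra_simps)
      have e2: "\<bar>da * fst q + db\<bar> < 4*\<rho>" using key[OF l] key[OF l0]
        abs_triangle_ineq4[of "fst l * fst q + snd l - snd q" "fst l0 * fst q + snd l0 - snd q"] unfolding eq2 by linarith
      have "da * (fst p - fst q) = (da * fst p + db) - (da * fst q + db)" by (simp add: algebra_simps)
      then have "\<bar>da\<bar> * \<bar>fst p - fst q\<bar> < 8*\<rho>" using e1 e2 by (simp add: abs_mult[symmetric])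
      then have "\<bar>da\<bar> * (c0/2) < 8*\<rho>" using far by (smt (verit) abs_ge_zero mult_left_mono)
      then have da: "\<bar>da\<bar> < 16*\<rho>/c0" using c0 by (simp add: field_simps)
      have "\<bar>da * fst p\<bar> \<le> \<bar>da\<bar> * 2" using key[OF l] by (simp add: abs_mult mult_left_mono)
      then have "\<bar>db\<bar> < 4*\<rho> + 32*\<rho>/c0" using e1 da by linarith
      moreover have "4*\<rho> \<le> 4*\<rho>/c0" using c0 rho by (simp add: field_simps)
      ultimately have "\<bar>db\<bar> \<le> 36*\<rho>/c0" by (simp add: add_divide_distrib[symmetric])
      moreover have "\<bar>da\<bar> \<le> 36*\<rho>/c0" using da c0 rho by (smt (verit) divide_right_mono)
      ultimately show ?thesis unfolding da_def db_def by simp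
    qed
    have sepS: "separated \<rho> S" using sep unfolding separated_def S_def by auto
    have "finite S \<and> real (card S) \<le> (2 * of_int \<lceil>2*(36*\<rho>/c0)/\<rho>\<rceil> + 1)^2"
      by (rule packing[OF rho(1) sepS box])
    moreover have "2*(36*\<rho>/c0)/\<rho> = 72/c0" using rho by simp
    ultimately have "real (card S) \<le> (2 * of_int \<lceil>72/c0\<rceil> + 1)^2" by simp
    then show ?thesis by (simp only: S_def)
  qed
qed

lemma card_filter_real: "finite A \<Longrightarrow> real (card {x\<in>A. P x}) = (\<Sum>x\<in>A. if P x then 1 else 0)"
proof -
  assume "finite A"
  have "real (card {x\<in>A. P x}) = (\<Sum>x\<in>{x\<in>A. P x}. 1)" by simp
  also have "\<dots> = (\<Sum>x\<in>A. if P x then 1 else 0)" by (rule sum.inter_filter[OF \<open>finite A\<close>])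
  finally show ?thesis .
qed

lemma double_count:
  fixes \<Lambda> :: "'a set" and F :: "'b set" and R :: "'a \<Rightarrow> 'b \<Rightarrow> bool"
  assumes "finite \<Lambda>" "finite F" "\<And>p. p \<in> F \<Longrightarrow> real (card {l\<in>\<Lambda>. R l p}) \<le> M1"
  shows "(\<Sum>l\<in>\<Lambda>. real (card {p\<in>F. R l p})) \<le> real (card F) * M1"
proof -
  have "(\<Sum>l\<in>\<Lambda>. real (card {p\<in>F. R l p})) = (\<Sum>l\<in>\<Lambda>. \<Sum>p\<in>F. if R l p then 1 else 0)"
    using card_filter_real[OF assms(2)] by simp
  also have "\<dots> = (\<Sum>p\<in>F. \<Sum>l\<in>\<Lambda>. if R l p then 1 else 0)" by (rule sum.swap)
  also have "\<dots> = (\<Sum>p\<in>F. real (card {l\<in>\<Lambda>. R l p}))"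
    using card_filter_real[OF assms(1)] by simp
  also have "\<dots> \<le> (\<Sum>p\<in>F. M1)" by (rule sum_mono) (rule assms(3))
  also have "\<dots> = real (card F) * M1" by simp
  finally show ?thesis .
qed

lemma small_case:
  fixes \<Omega> \<Lambda> :: "(real \<times> real) set" and \<nu> :: "real \<times> real \<Rightarrow> (real \<times> real) measure"
  assumes c0: "0 < c0" "c0 \<le> 1" "K * c0 powr \<alpha> \<le> 1/2"
    and rho: "0 < \<rho>" "\<delta> \<le> \<rho>" "2*\<rho> \<le> c0"
    and F: "furstenberg_tuple \<delta> \<alpha> K \<Omega> \<nu>"
    and L: "\<Lambda> \<subseteq> \<Omega>" "separated \<rho> \<Lambda>" "finite \<Lambda>"
    and cov: "real (covering_number \<rho> (\<Union>\<omega>\<in>\<Omega>. support (\<nu> \<omega>))) \<le> Nb"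
  shows "real (card \<Lambda>) \<le> 2 * (K * \<rho> powr \<alpha>)^2 * (2 * of_int \<lceil>72/c0\<rceil> + 1)^2 * Nb^2"
proof -
  define E where "E = (\<Union>\<omega>\<in>\<Omega>. support (\<nu> \<omega>))"
  define M1 where "M1 = (2 * real_of_int \<lceil>72/c0\<rceil> + 1)^2"
  define C2 where "C2 = (K * \<rho> powr \<alpha>)^2"
  have C2nn: "0 \<le> C2" unfolding C2_def by (rule zero_le_power2)
  have M1nn: "0 \<le> M1" unfolding M1_def by (rule zero_le_power2)
  have Om: "\<Omega> \<subseteq> ball 0 1" using F unfolding furstenberg_tuple_def by simp
  have nu: "\<And>\<omega>. \<omega> \<in> \<Omega> \<Longrightarrow> \<exists>\<nu>'. dak_measure \<delta> \<alpha> K \<nu>' \<and> \<nu> \<omega> = distr \<nu>' borel (\<lambda>x. (x, line_map \<omega> x))"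
    using F unfolding furstenberg_tuple_def by blast
  have lm: "(\<lambda>x. (x, line_map \<omega> x)) = (\<lambda>x. (x, fst \<omega> * x + snd \<omega>))" for \<omega>
    by (simp add: line_map_def)
  have absfs: "\<bar>fst \<omega>\<bar> < 1 \<and> \<bar>snd \<omega>\<bar> < 1" if "\<omega> \<in> ball 0 1" for \<omega> :: "real \<times> real"
  proof -
    have "\<bar>fst \<omega>\<bar> \<le> norm \<omega>" "\<bar>snd \<omega>\<bar> \<le> norm \<omega>"
      by (metis fst_conv norm_fst_le prod.collapse real_norm_def) (metis snd_conv norm_snd_le prod.collapse real_norm_def)
    moreover have "norm \<omega> < 1" using that by (simp add: dist_norm)
    ultimately show ?thesis by linarith
  qed
  have Ebd: "E \<subseteq> cball 0 4"
  proof
    fix z assume "z \<in> E"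
    then obtain \<omega> where w: "\<omega> \<in> \<Omega>" "z \<in> support (\<nu> \<omega>)" unfolding E_def by blast
    obtain \<nu>' where nu'': "dak_measure \<delta> \<alpha> K \<nu>' \<and> \<nu> \<omega> = distr \<nu>' borel (\<lambda>x. (x, line_map \<omega> x))"
      using nu[OF w(1)] ..
    note nu' = conjunct1[OF nu''] conjunct2[OF nu'']
    have "support (\<nu> \<omega>) \<subseteq> cball 0 4" unfolding nu'(2) lm
      by (rule support_bounded[OF nu'(1)]) (use absfs[of \<omega>] w Om in auto)
    then show "z \<in> cball 0 4" using w by blast
  qed
  obtain k where k: "finite k" "cball (0::real\<times>real) 4 \<subseteq> (\<Union>x\<in>k. ball x \<rho>)"
    using compact_eq_totally_bounded[THEN iffD1, OF compact_cball[of "0::real\<times>real" 4]] rho(1) by blast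
  define Cset where "Cset = {card C |C. finite C \<and> E \<subseteq> (\<Union>c\<in>C. ball c \<rho>)}"
  have "card k \<in> Cset" unfolding Cset_def using k Ebd by blast
  then have "Inf Cset \<in> Cset" by (intro Inf_nat_def1) blast
  then obtain C where C: "finite C" "E \<subseteq> (\<Union>c\<in>C. ball c \<rho>)" "card C = covering_number \<rho> E"
    unfolding Cset_def covering_number_def by auto
  obtain cs where cs: "set cs = C" "distinct cs" using finite_distinct_list[OF C(1)] by blast
  define N where "N = length cs"
  have NC: "N = card C" unfolding N_def using distinct_card[OF cs(2)] cs(1) by simp
  define U where "U = (\<Union>k<length cs. ball (cs!k) \<rho>)"
  have UC: "(\<Union>c\<in>C. ball c \<rho>) = U"
  proof
    show "(\<Union>c\<in>C. ball c \<rho>) \<subseteq> U"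
    proof
      fix z assume "z \<in> (\<Union>c\<in>C. ball c \<rho>)"
      then obtain c where c: "c \<in> C" "z \<in> ball c \<rho>" by blast
      then obtain i where "i < length cs" "cs!i = c" using cs(1) by (auto simp: in_set_conv_nth)
      then show "z \<in> U" unfolding U_def using c(2) by blast
    qed
    show "U \<subseteq> (\<Union>c\<in>C. ball c \<rho>)" unfolding U_def using cs(1) by auto
  qed
  have Uo: "open U" unfolding U_def by auto
  define Q where "Q l i = (\<exists>x\<in>{-1<..<1}. dist (x, line_map l x) (cs!i) < \<rho>)" for l i
  define Fp where "Fp = {(i,j). i < N \<and> j < N \<and> c0/2 \<le> \<bar>fst (cs!i) - fst (cs!j)\<bar>}"
  define R where "R l p = (Q l (fst p) \<and> Q l (snd p))" for l p
  have finFp: "finite Fp" unfolding Fp_def by (rule finite_subset[of _ "{..<N}\<times>{..<N}"]) auto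
  have per: "1/2 \<le> real (card {p\<in>Fp. R l p}) * C2" if l: "l \<in> \<Lambda>" for l
  proof -
    have lO: "l \<in> \<Omega>" using l L by auto
    obtain \<nu>' where nu'': "dak_measure \<delta> \<alpha> K \<nu>' \<and> \<nu> l = distr \<nu>' borel (\<lambda>x. (x, line_map l x))"
      using nu[OF lO] ..
    note nu' = conjunct1[OF nu''] conjunct2[OF nu'']
    have sub: "support (distr \<nu>' borel (\<lambda>x. (x, fst l * x + snd l))) \<subseteq> U"
    proof -
      have "support (\<nu> l) \<subseteq> E" unfolding E_def using lO by blast
      then show ?thesis using nu'(2) C(2) UC unfolding lm by simp
    qed
    have cv: "measure \<nu>' ({-1<..<1} \<inter> (\<lambda>x. (x, fst l * x + snd l)) -` (\<Union>k<length cs. ball (cs!k) \<rho>)) = 1"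
      using line_cover[OF nu'(1) sub Uo] unfolding U_def .
    have lp: "1/2 \<le> real (card {(i,j). i < length cs \<and> j < length cs \<and> c0/2 \<le> \<bar>fst (cs!i) - fst (cs!j)\<bar> \<and>
            (\<exists>x\<in>{-1<..<1}. dist (x, fst l*x+snd l) (cs!i) < \<rho>) \<and> (\<exists>x\<in>{-1<..<1}. dist (x, fst l*x+snd l) (cs!j) < \<rho>)}) * (K * \<rho> powr \<alpha>)^2"
      by (rule line_pairs[OF nu'(1) rho(1) rho(2) rho(3) c0(2) c0(3) cv])
    have "{(i,j). i < length cs \<and> j < length cs \<and> c0/2 \<le> \<bar>fst (cs!i) - fst (cs!j)\<bar> \<and>
            (\<exists>x\<in>{-1<..<1}. dist (x, fst l*x+snd l) (cs!i) < \<rho>) \<and> (\<exists>x\<in>{-1<..<1}. dist (x, fst l*x+snd l) (cs!j) < \<rho>)}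
          = {p\<in>Fp. R l p}"
      unfolding Fp_def R_def Q_def N_def line_map_def by auto
    then show ?thesis using lp unfolding C2_def by simp
  qed
  have pc: "real (card {l\<in>\<Lambda>. R l p}) \<le> M1" if p: "p \<in> Fp" for p
  proof -
    obtain i j where ij: "p = (i,j)" "i < N" "j < N" "c0/2 \<le> \<bar>fst (cs!i) - fst (cs!j)\<bar>"
      using p unfolding Fp_def by auto
    have "{l\<in>\<Lambda>. R l p} = {l\<in>\<Lambda>. (\<exists>x\<in>{-1<..<1}. dist (x, line_map l x) (cs!i) < \<rho>) \<and>
                              (\<exists>x\<in>{-1<..<1}. dist (x, line_map l x) (cs!j) < \<rho>)}"
      unfolding R_def Q_def ij(1) by simp
    also have "real (card \<dots>) \<le> M1" unfolding M1_def
      by (rule pair_count) (use L Om rho c0 ij in auto)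
    finally show ?thesis .
  qed
  have "(\<Sum>l\<in>\<Lambda>. (1/2::real)) \<le> (\<Sum>l\<in>\<Lambda>. real (card {p\<in>Fp. R l p}) * C2)"
    by (rule sum_mono) (rule per)
  also have "\<dots> = (\<Sum>l\<in>\<Lambda>. real (card {p\<in>Fp. R l p})) * C2" by (simp add: sum_distrib_right)
  also have "\<dots> \<le> (real (card Fp) * M1) * C2"
    by (rule mult_right_mono[OF double_count[OF L(3) finFp pc] C2nn])
  also have "real (card Fp) \<le> real N * real N"
  proof -
    have "card Fp \<le> card ({..<N}\<times>{..<N})" by (rule card_mono) (auto simp: Fp_def)
    then have "card Fp \<le> N * N" by (simp add: card_cartesian_product)
    then show ?thesis by (metis of_nat_le_iff of_nat_mult)
  qed
  then have "(real (card Fp) * M1) * C2 \<le> (real N * real N * M1) * C2"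
    by (intro mult_right_mono) (use M1nn C2nn in auto)
  also have "real N \<le> Nb" using cov C(3) NC unfolding E_def by simp
  then have "real N * real N \<le> Nb * Nb" by (intro mult_mono) auto
  then have "(real N * real N * M1) * C2 \<le> (Nb * Nb * M1) * C2"
    by (intro mult_right_mono) (use M1nn C2nn in auto)
  finally have "real (card \<Lambda>) / 2 \<le> Nb * Nb * M1 * C2" by simp
  then show ?thesis unfolding M1_def C2_def by (simp add: power2_eq_square algebra_simps)
qed

lemma powr_sq: "0 < (x::real) \<Longrightarrow> (x powr a)^2 = x powr (2*a)"
  by (simp add: power2_eq_square powr_add[symmetric])

theorem lemma9:
  fixes \<alpha> \<beta> K A :: real
  assumes "\<alpha> > 0" "\<beta> > 0" "K \<ge> 1" "A \<ge> 1"
  shows "\<exists>c>0. \<forall>(\<eta>::real) (s::real) (\<delta>::real) (\<Omega>::(real \<times> real) set) \<nu> \<Lambda>.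
     \<eta> > 0 \<longrightarrow> 0 < s \<longrightarrow> s < 1 \<longrightarrow> 0 < \<delta> \<longrightarrow> \<delta> < 1 \<longrightarrow>
     furstenberg_tuple \<delta> \<alpha> K \<Omega> \<nu> \<longrightarrow> \<Omega> \<noteq> {} \<longrightarrow>
     (\<forall>x r. \<delta> \<le> r \<and> r \<le> 1 \<longrightarrow> real (card (\<Omega> \<inter> ball x r)) \<le> A * r powr \<beta> * real (card \<Omega>)) \<longrightarrow>
     real (covering_number (\<delta> powr s) (\<Union>\<omega>\<in>\<Omega>. support (\<nu> \<omega>)))
        \<le> (\<delta> powr s) powr (- \<alpha> - \<beta> / 2 - \<eta>) \<longrightarrow>
     maximal_separated_subset (\<delta> powr s) \<Lambda> \<Omega> \<longrightarrow>
     (\<exists>\<Lambda>'\<subseteq>\<Lambda>. real (card \<Lambda>') \<ge> c * (\<delta> powr s) powr (- \<beta>) \<and>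
        (\<forall>l\<in>\<Lambda>'. real (card (\<Omega> \<inter> ball l (\<delta> powr s)))
                    \<ge> c * (\<delta> powr s) powr (\<beta> + 2 * \<eta>) * real (card \<Omega>)))"
proof -
  define c0 where "c0 = (1/(2*K)) powr (1/\<alpha>)"
  have Kp: "0 < K" using assms(3) by simp
  have c0pos: "0 < c0" unfolding c0_def using Kp by simp
  have c0pow: "c0 powr \<alpha> = 1/(2*K)" unfolding c0_def using assms(1) Kp by (simp add: powr_powr)
  have c0K: "K * c0 powr \<alpha> \<le> 1/2" using Kp by (simp add: c0pow)
  have c0le: "c0 \<le> 1" unfolding c0_def using assms(1,3) by (intro powr_le1) auto
  define M1 where "M1 = (2 * real_of_int \<lceil>72/c0\<rceil> + 1)^2"
  define M2 where "M2 = (2 * real_of_int \<lceil>4/c0\<rceil> + 1)^2"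
  define B where "B = 2*K^2*M1 + M2"
  have M1nn: "0 \<le> M1" unfolding M1_def by simp
  have m2: "0 \<le> real_of_int \<lceil>4/c0\<rceil>"
  proof -
    have "0 \<le> 4/c0" using c0pos by simp
    then show ?thesis using le_of_int_ceiling[of "4/c0"] by linarith
  qed
  have M2ge: "1 \<le> M2" unfolding M2_def using m2 by (intro one_le_power) linarith
  have Bge: "1 \<le> B" unfolding B_def using M1nn M2ge by (smt (verit) mult_nonneg_nonneg zero_le_power2)
  define c where "c = min (1/(2*A)) (1/(2*B))"
  have cpos: "0 < c" unfolding c_def using assms(4) Bge by simp
  show ?thesis
  proof (rule exI[of _ c], intro conjI allI impI)
    show "0 < c" by (rule cpos)
    fix \<eta> s \<delta> :: real and \<Omega> :: "(real \<times> real) set" and \<nu> :: "real \<times> real \<Rightarrow> (real \<times> real) measure" and \<Lambda>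
    assume h\<eta>: "\<eta> > 0" and hs0: "0 < s" and hs1: "s < 1" and hd0: "0 < \<delta>" and hd1: "\<delta> < 1"
      and F: "furstenberg_tuple \<delta> \<alpha> K \<Omega> \<nu>" and ne: "\<Omega> \<noteq> {}"
      and fro: "\<forall>x r. \<delta> \<le> r \<and> r \<le> 1 \<longrightarrow> real (card (\<Omega> \<inter> ball x r)) \<le> A * r powr \<beta> * real (card \<Omega>)"
      and cov: "real (covering_number (\<delta> powr s) (\<Union>\<omega>\<in>\<Omega>. support (\<nu> \<omega>)))
        \<le> (\<delta> powr s) powr (- \<alpha> - \<beta> / 2 - \<eta>)"
      and mx: "maximal_separated_subset (\<delta> powr s) \<Lambda> \<Omega>"
    define \<rho> where "\<rho> = \<delta> powr s"
    have rpos: "0 < \<rho>" unfolding \<rho>_def using hd0 by simp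
    have rlt1: "\<rho> < 1" unfolding \<rho>_def using hd0 hd1 hs0 by (simp add: powr01_less_one)
    have dler: "\<delta> \<le> \<rho>" unfolding \<rho>_def using powr_mono'[of s 1 \<delta>] hs1 hd0 hd1 by simp
    have Om: "\<Omega> \<subseteq> ball 0 1" and sepO: "separated \<delta> \<Omega>" using F unfolding furstenberg_tuple_def by auto
    have normb: "\<bar>fst p\<bar> \<le> 1 \<and> \<bar>snd p\<bar> \<le> 1" if "p \<in> ball (0::real\<times>real) 1" for p
    proof -
      have "\<bar>fst p\<bar> \<le> norm p" "\<bar>snd p\<bar> \<le> norm p"
        by (metis fst_conv norm_fst_le prod.collapse real_norm_def) (metis snd_conv norm_snd_le prod.collapse real_norm_def)
      moreover have "norm p < 1" using that by (simp add: dist_norm)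
      ultimately show ?thesis by linarith
    qed
    have finO: "finite \<Omega>"
    proof -
      have "\<bar>fst p - fst (0::real\<times>real)\<bar> \<le> 1 \<and> \<bar>snd p - snd (0::real\<times>real)\<bar> \<le> 1" if "p \<in> \<Omega>" for p
        using normb[of p] that Om by auto
      then show ?thesis using packing[OF hd0 sepO, of 0 1] by blast
    qed
    have LO: "\<Lambda> \<subseteq> \<Omega>" and sepL: "separated \<rho> \<Lambda>"
      and maxL: "\<And>L'. \<Lambda> \<subseteq> L' \<Longrightarrow> L' \<subseteq> \<Omega> \<Longrightarrow> separated \<rho> L' \<Longrightarrow> L' = \<Lambda>"
      using mx unfolding maximal_separated_subset_def \<rho>_def by auto
    have finL: "finite \<Lambda>" using finite_subset[OF LO finO] .
    have covO: "\<exists>l\<in>\<Lambda>. dist l \<omega> < \<rho>" if w: "\<omega> \<in> \<Omega>" for \<omega>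
    proof (rule ccontr)
      assume nc: "\<not> (\<exists>l\<in>\<Lambda>. dist l \<omega> < \<rho>)"
      have "separated \<rho> (insert \<omega> \<Lambda>)" unfolding separated_def
      proof (intro ballI impI)
        fix x y assume xy: "x \<in> insert \<omega> \<Lambda>" "y \<in> insert \<omega> \<Lambda>" "x \<noteq> y"
        show "\<rho> \<le> dist x y"
        proof (cases "x = \<omega>")
          case True
          then have "y \<in> \<Lambda>" using xy by auto
          then show ?thesis using nc True by (auto simp: dist_commute not_less)
        next
          case False
          then have xL: "x \<in> \<Lambda>" using xy by auto
          show ?thesis
          proof (cases "y = \<omega>")
            case True then show ?thesis using nc xL by (auto simp: not_less)
          next
            case False then have "y \<in> \<Lambda>" using xy by auto
            then show ?thesis using sepL xL xy(3) unfolding separated_def by blast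
          qed
        qed
      qed
      then have "insert \<omega> \<Lambda> = \<Lambda>" using maxL[of "insert \<omega> \<Lambda>"] LO w by auto
      then have "\<omega> \<in> \<Lambda>" by blast
      then show False using nc rpos by auto
    qed
    define f where "f l = real (card (\<Omega> \<inter> ball l \<rho>))" for l
    have sumge: "real (card \<Omega>) \<le> (\<Sum>l\<in>\<Lambda>. f l)"
    proof -
      have "\<Omega> = (\<Union>l\<in>\<Lambda>. \<Omega> \<inter> ball l \<rho>)" using covO by auto
      then have "card \<Omega> \<le> (\<Sum>l\<in>\<Lambda>. card (\<Omega> \<inter> ball l \<rho>))" using card_UN_le[OF finL, of "\<lambda>l. \<Omega> \<inter> ball l \<rho>"] by simp
      then show ?thesis unfolding f_def by (metis of_nat_le_iff of_nat_sum)
    qed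
    have frost: "f l \<le> A * \<rho> powr \<beta> * real (card \<Omega>)" for l
      using fro[rule_format, of \<rho> l] dler rlt1 unfolding f_def by simp
    define e where "e = - \<beta> - 2*\<eta>"
    have pe1: "1 \<le> \<rho> powr e"
    proof -
      have "\<rho> powr 0 \<le> \<rho> powr e" by (rule powr_mono') (use rpos rlt1 h\<eta> assms(2) in \<open>auto simp: e_def\<close>)
      then show ?thesis using rpos by simp
    qed
    have KEY: "real (card \<Lambda>) \<le> B * \<rho> powr e"
    proof (cases "2*\<rho> \<le> c0")
      case True
      define Nb where "Nb = \<rho> powr (- \<alpha> - \<beta> / 2 - \<eta>)"
      have cov': "real (covering_number \<rho> (\<Union>\<omega>\<in>\<Omega>. support (\<nu> \<omega>))) \<le> Nb"
        using cov unfolding \<rho>_def Nb_def .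
      have sc: "real (card \<Lambda>) \<le> 2 * (K * \<rho> powr \<alpha>)^2 * (2 * of_int \<lceil>72/c0\<rceil> + 1)^2 * Nb^2"
        by (rule small_case[OF c0pos c0le c0K rpos dler True F LO sepL finL cov'])
      have "(K * \<rho> powr \<alpha>)^2 * Nb^2 = K^2 * (\<rho> powr \<alpha> * Nb)^2" by (simp add: power_mult_distrib)
      also have "\<rho> powr \<alpha> * Nb = \<rho> powr (\<alpha> + (- \<alpha> - \<beta> / 2 - \<eta>))" unfolding Nb_def by (simp add: powr_add[symmetric])
      also have "(\<rho> powr (\<alpha> + (- \<alpha> - \<beta> / 2 - \<eta>)))^2 = \<rho> powr e"
      proof -
        have ee: "2*(\<alpha> + (- \<alpha> - \<beta> / 2 - \<eta>)) = e" unfolding e_def by simp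
        show ?thesis using powr_sq[OF rpos, of "\<alpha> + (- \<alpha> - \<beta> / 2 - \<eta>)"] unfolding ee .
      qed
      finally have eq: "(K * \<rho> powr \<alpha>)^2 * Nb^2 = K^2 * \<rho> powr e" .
      have r1: "2 * (K * \<rho> powr \<alpha>)^2 * (2 * of_int \<lceil>72/c0\<rceil> + 1)^2 * Nb^2 = (2 * M1) * ((K * \<rho> powr \<alpha>)^2 * Nb^2)"
        unfolding M1_def by (simp only: mult_ac)
      have r2: "(2 * M1) * (K^2 * \<rho> powr e) = (2*K^2*M1) * \<rho> powr e" by (simp only: mult_ac)
      have "real (card \<Lambda>) \<le> (2*K^2*M1) * \<rho> powr e"
        using sc unfolding r1 eq r2 .
      also have "\<dots> \<le> B * \<rho> powr e" unfolding B_def using M2ge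
        by (intro mult_right_mono) auto
      finally show ?thesis .
    next
      case False
      have box: "\<bar>fst p - fst (0::real\<times>real)\<bar> \<le> 1 \<and> \<bar>snd p - snd (0::real\<times>real)\<bar> \<le> 1" if "p \<in> \<Lambda>" for p
        using normb[of p] that LO Om by auto
      have pk: "real (card \<Lambda>) \<le> (2 * of_int \<lceil>2*1/\<rho>\<rceil> + 1)^2"
        using packing[OF rpos sepL box] by simp
      have "2*1/\<rho> \<le> 4/c0" using False c0pos rpos by (simp add: field_simps)
      then have "\<lceil>2*1/\<rho>\<rceil> \<le> \<lceil>4/c0\<rceil>" by (rule ceiling_mono)
      moreover have "0 \<le> real_of_int \<lceil>2*1/\<rho>\<rceil>"
      proof -
        have "0 \<le> 2*1/\<rho>" using rpos by simp
        then show ?thesis using le_of_int_ceiling[of "2*1/\<rho>"] by linarith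
      qed
      ultimately have "(2 * of_int \<lceil>2*1/\<rho>\<rceil> + 1)^2 \<le> M2" unfolding M2_def
        by (intro power_mono) auto
      also have "M2 \<le> B" unfolding B_def using M1nn by simp
      also have "B \<le> B * \<rho> powr e" using Bge pe1 by simp
      finally show ?thesis using pk by linarith
    qed
    define thr where "thr = c * \<rho> powr (\<beta> + 2*\<eta>) * real (card \<Omega>)"
    have thr0: "0 \<le> thr" unfolding thr_def using cpos by simp
    define H where "H = {l\<in>\<Lambda>. thr \<le> f l}"
    have HL: "H \<subseteq> \<Lambda>" unfolding H_def by auto
    have "(\<Sum>l\<in>\<Lambda>. f l) = (\<Sum>l\<in>\<Lambda>-H. f l) + (\<Sum>l\<in>H. f l)" by (rule sum.subset_diff[OF HL finL])
    also have "(\<Sum>l\<in>\<Lambda>-H. f l) \<le> (\<Sum>l\<in>\<Lambda>-H. thr)" by (rule sum_mono) (auto simp: H_def)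
    also have "(\<Sum>l\<in>\<Lambda>-H. thr) \<le> real (card \<Lambda>) * thr"
    proof -
      have "card (\<Lambda> - H) \<le> card \<Lambda>" by (rule card_mono[OF finL]) auto
      then show ?thesis using thr0 by (simp add: mult_right_mono)
    qed
    also have "real (card \<Lambda>) * thr \<le> (B * \<rho> powr e) * thr" by (rule mult_right_mono[OF KEY thr0])
    also have "(B * \<rho> powr e) * thr = B * c * real (card \<Omega>) * (\<rho> powr e * \<rho> powr (\<beta> + 2*\<eta>))"
      unfolding thr_def by (simp add: algebra_simps)
    also have "\<rho> powr e * \<rho> powr (\<beta> + 2*\<eta>) = 1" unfolding e_def using rpos by (simp add: powr_add[symmetric])
    also have "B * c * real (card \<Omega>) * 1 \<le> real (card \<Omega>) / 2"
    proof -
      have "c \<le> 1/(2*B)" unfolding c_def by simp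
      then have "B * c \<le> 1/2" using Bge by (simp add: field_simps)
      then have "(B * c) * real (card \<Omega>) \<le> (1/2) * real (card \<Omega>)" by (rule mult_right_mono) simp
      then show ?thesis by simp
    qed
    also have "(\<Sum>l\<in>H. f l) \<le> (\<Sum>l\<in>H. A * \<rho> powr \<beta> * real (card \<Omega>))" by (rule sum_mono) (rule frost)
    also have "\<dots> = real (card H) * (A * \<rho> powr \<beta> * real (card \<Omega>))" by simp
    finally have tot: "real (card \<Omega>) \<le> real (card \<Omega>) / 2 + real (card H) * (A * \<rho> powr \<beta> * real (card \<Omega>))"
      using sumge by linarith
    have Opos: "0 < real (card \<Omega>)" using finO ne by (simp add: card_gt_0_iff)
    have "real (card \<Omega>) * (1/2) \<le> real (card \<Omega>) * (real (card H) * A * \<rho> powr \<beta>)"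
      using tot by (simp add: algebra_simps)
    then have half: "1/2 \<le> real (card H) * A * \<rho> powr \<beta>" using Opos by (simp add: mult_le_cancel_left_pos)
    have "c * \<rho> powr (- \<beta>) \<le> (1/(2*A)) * \<rho> powr (- \<beta>)" unfolding c_def
      by (intro mult_right_mono) auto
    also have "\<dots> = 1 / (2 * A * \<rho> powr \<beta>)" by (simp add: powr_minus_divide)
    also have "\<dots> \<le> real (card H)"
    proof -
      have "0 < 2 * A * \<rho> powr \<beta>" using assms(4) rpos by simp
      then show ?thesis using half by (simp add: divide_le_eq algebra_simps)
    qed
    finally have cardH: "c * \<rho> powr (- \<beta>) \<le> real (card H)" .
    have Hth: "\<forall>l\<in>H. c * \<rho> powr (\<beta> + 2 * \<eta>) * real (card \<Omega>) \<le> real (card (\<Omega> \<inter> ball l \<rho>))"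
      unfolding H_def thr_def f_def by auto
    show "\<exists>\<Lambda>'\<subseteq>\<Lambda>. c * (\<delta> powr s) powr (- \<beta>) \<le> real (card \<Lambda>') \<and>
        (\<forall>l\<in>\<Lambda>'. c * (\<delta> powr s) powr (\<beta> + 2 * \<eta>) * real (card \<Omega>) \<le> real (card (\<Omega> \<inter> ball l (\<delta> powr s))))"
      using HL cardH Hth unfolding \<rho>_def by blast
  qed
qed

end
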